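(* Consider the system \[ x_{k+1} = x_k - \rho y_k + \hat g(y_k,w_k),\qquad y_{k+1} = (1-\beta)y_k + \hat h(y_{k-1},w_{k-1})\bigl(J(x_k)-J(x_{k-1})\bigr) \] with the setup described in the context. Then for any function $\bar f:\mathbb{R}^3\to\mathbb{R}$ and any $k\ge1$, \[ \mathbb{E}\Bigl[\frac{\mu h_{k-1}\bar f(x_{k-1},y_{k-1},y_k)}{|y_{k-1}|+\varepsilon}\Delta_{k-1}\Bigr] =\mu\gamma\,\mathbb{E}\bigl[\bar f(x_{k-1},y_{k-1},y_k)\,(\tilde x_{k-1}-\rho y_{k-1})\bigr]. \]
   Context: Setup. Parameters: $\rho>0$, $\beta\in(0,2)$, $\varepsilon>0$, $\omega>0$. The random variables $w_i$, $i\in\mathbb{N}\cup\{0\}$, are i.i.d., each taking the value $-\omega$ or $\omega$ with probability $1/2$. The functions $h,g:\mathbb{R}\to\mathbb{R}$ are odd, satisfy $\mathrm{sign}(g(w))=\mathrm{sign}(h(w))$ for all $w$, and $g(w)=h(w)=0$ if and only if $w=0$. Define $\hat h(y,w):=\frac{h(w)}{|y|+\varepsilon}$ and $\hat g(y,w):=(|y|+\varepsilon)g(w)$. The objective is $J(x)=J^*+\frac{\mu}{2}(x-x^* )^2$ with $\mu>0$, $x^*,J^*\in\mathbb{R}$. The initial data $x_0,y_0$ and the initialization $y_1$ (the $y$-update being applied for $k\ge1$) are deterministic. Notation: $h_k:=h(w_k)$, $g_k:=g(w_k)$, $\tilde x_k:=x_k-x^*$, $\gamma:=\mathbb{E}[h_kg_k]$,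 and \[ \Delta_{k-1}:=(\tilde x_{k-1}-\rho y_{k-1})(|y_{k-1}|+\varepsilon)g_{k-1}-\rho\tilde x_{k-1}y_{k-1}+\tfrac{\rho^2}{2}y_{k-1}^2+\tfrac{g_{k-1}^2}{2}(|y_{k-1}|+\varepsilon)^2, \] so that $J(x_k)=J(x_{k-1})+\mu\Delta_{k-1}$. *)

theory Defs
  imports "HOL-Probability.Probability"
begin

definition Jobj :: "real \<Rightarrow> real \<Rightarrow> real \<Rightarrow> real \<Rightarrow> real" where
  "Jobj Jstar mu xstar x = Jstar + mu / 2 * (x - xstar)^2"

definition hhat :: "(real \<Rightarrow> real) \<Rightarrow> real \<Rightarrow> real \<Rightarrow> real \<Rightarrow> real" where
  "hhat h eps y w = h w / (\<bar>y\<bar> + eps)"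

definition ghat :: "(real \<Rightarrow> real) \<Rightarrow> real \<Rightarrow> real \<Rightarrow> real \<Rightarrow> real" where
  "ghat g eps y w = (\<bar>y\<bar> + eps) * g w"

fun traj :: "real \<Rightarrow> real \<Rightarrow> real \<Rightarrow> real \<Rightarrow> (real \<Rightarrow> real) \<Rightarrow> (real \<Rightarrow> real)
    \<Rightarrow> (real \<Rightarrow> real) \<Rightarrow> real \<Rightarrow> real \<Rightarrow> real \<Rightarrow> (nat \<Rightarrow> real) \<Rightarrow> nat \<Rightarrow> real \<times> real" where
  "traj rho beta eps mu J h g x0 y0 y1 ws 0 = (x0, y0)"
| "traj rho beta eps mu J h g x0 y0 y1 ws (Suc 0) =
     (x0 - rho * y0 + ghat g eps y0 (ws 0), y1)"
| "traj rho beta eps mu J h g x0 y0 y1 ws (Suc (Suc k)) =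
     (let (xk, yk) = traj rho beta eps mu J h g x0 y0 y1 ws k;
          (xk1, yk1) = traj rho beta eps mu J h g x0 y0 y1 ws (Suc k)
      in (xk1 - rho * yk1 + ghat g eps yk1 (ws (Suc k)),
          (1 - beta) * yk1 + hhat h eps yk (ws k) * (J xk1 - J xk)))"

definition Delta :: "real \<Rightarrow> real \<Rightarrow> (real \<Rightarrow> real) \<Rightarrow> real \<Rightarrow> real \<Rightarrow> real \<Rightarrow> real \<Rightarrow> real" where
  "Delta rho eps g xstar x y w =
     (x - xstar - rho * y) * (\<bar>y\<bar> + eps) * g w - rho * (x - xstar) * y
     + rho^2 / 2 * y^2 + (g w)^2 / 2 * (\<bar>y\<bar> + eps)^2"

end

theory Submission
  imports Defs
begin

lemma traj_dep:
  "(\<forall>i<n. ws i = ws' i) \<Longrightarrow> traj rho beta eps mu J h g x0 y0 y1 ws n = traj rho beta eps mu J h g x0 y0 y1 ws' n"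
proof (induction n rule: less_induct)
  case (less n)
  consider "n = 0" | "n = Suc 0" | k where "n = Suc (Suc k)"
    by (metis not0_implies_Suc)
  then show ?case
  proof cases
    case 3
    have a: "traj rho beta eps mu J h g x0 y0 y1 ws k = traj rho beta eps mu J h g x0 y0 y1 ws' k"
      apply (rule less.IH) using less.prems 3 by simp_all
    have b: "traj rho beta eps mu J h g x0 y0 y1 ws (Suc k) = traj rho beta eps mu J h g x0 y0 y1 ws' (Suc k)"
      apply (rule less.IH) using less.prems 3 by simp_all
    have c: "ws (Suc k) = ws' (Suc k)" "ws k = ws' k" using less.prems 3 by simp_all
    show ?thesis unfolding 3 by (simp only: traj.simps a b c)
  next
    case 1 then show ?thesis by simp
  next
    case 2 then show ?thesis using less.prems by simp
  qed
qed

lemma traj_dep_snd: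
  assumes "\<forall>i<n. ws i = ws' i"
  shows "snd (traj rho beta eps mu J h g x0 y0 y1 ws (Suc n)) = snd (traj rho beta eps mu J h g x0 y0 y1 ws' (Suc n))"
proof (cases n)
  case 0 then show ?thesis by simp
next
  case (Suc m)
  have a: "traj rho beta eps mu J h g x0 y0 y1 ws m = traj rho beta eps mu J h g x0 y0 y1 ws' m"
    using assms Suc by (intro traj_dep) auto
  have b: "traj rho beta eps mu J h g x0 y0 y1 ws (Suc m) = traj rho beta eps mu J h g x0 y0 y1 ws' (Suc m)"
    using assms Suc by (intro traj_dep) auto
  have c: "ws m = ws' m" using assms Suc by auto
  show ?thesis unfolding Suc by (simp only: traj.simps a b c) (auto simp: Let_def split: prod.splits)
qed


lemma (in prob_space) finite_expect:
  fixes w :: "nat \<Rightarrow> 'a \<Rightarrow> real" and S :: "real set" and F :: "(nat \<Rightarrow> real) \<Rightarrow> real"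
  assumes ind: "indep_vars (\<lambda>_. borel) w UNIV"
    and vals: "\<And>i s. s \<in> space M \<Longrightarrow> w i s \<in> S"
    and pr: "\<And>i c. c \<in> S \<Longrightarrow> prob {s \<in> space M. w i s = c} = p"
    and fin: "finite I" "finite S"
  shows "integrable M (\<lambda>s. F (restrict (\<lambda>i. w i s) I))"
    and "expectation (\<lambda>s. F (restrict (\<lambda>i. w i s) I)) = (\<Sum>c\<in>PiE I (\<lambda>_. S). F c) * p ^ card I"
proof -
  define E where "E c = {s\<in>space M. \<forall>i\<in>I. w i s = c i}" for c :: "nat \<Rightarrow> real"
  have rv[measurable]: "\<And>i. w i \<in> borel_measurable M"
    using ind unfolding indep_vars_def by auto
  have Emeas: "E c \<in> events" for c
    unfolding E_def using fin(1) by measurable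
  have Eprob: "prob (E c) = p ^ card I" if c: "c \<in> PiE I (\<lambda>_. S)" for c
  proof (cases "I = {}")
    case True
    then show ?thesis by (simp add: E_def prob_space)
  next
    case False
    have "E c = (\<Inter>i\<in>I. w i -` {c i} \<inter> space M)"
      using False by (auto simp: E_def)
    then have "prob (E c) = (\<Prod>i\<in>I. prob (w i -` {c i} \<inter> space M))"
      using indep_varsD[OF ind False fin(1), of "\<lambda>i. {c i}"] by simp
    also have "\<dots> = (\<Prod>i\<in>I. p)"
    proof (rule prod.cong)
      fix i assume "i \<in> I"
      then have "c i \<in> S" using c by auto
      moreover have "w i -` {c i} \<inter> space M = {s \<in> space M. w i s = c i}" by auto
      ultimately show "prob (w i -` {c i} \<inter> space M) = p" using pr by simp
    qed simp
    finally show ?thesis by simp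
  qed
  have pt: "F (restrict (\<lambda>i. w i s) I) = (\<Sum>c\<in>PiE I (\<lambda>_. S). F c * indicator (E c) s)"
    if s: "s \<in> space M" for s
  proof -
    let ?v = "restrict (\<lambda>i. w i s) I"
    have "\<And>c. c \<in> PiE I (\<lambda>_. S) \<Longrightarrow> F c * indicator (E c) s = (if c = ?v then F ?v else 0)"
    proof -
      fix c assume c: "c \<in> PiE I (\<lambda>_. S)"
      have "(s \<in> E c) = (c = ?v)"
      proof
        assume "s \<in> E c"
        then show "c = ?v" using c by (auto simp: E_def PiE_def extensional_def fun_eq_iff)
      next
        assume "c = ?v" then show "s \<in> E c" using s by (auto simp: E_def)
      qed
      then show "F c * indicator (E c) s = (if c = ?v then F ?v else 0)"
        by (auto simp: indicator_def)
    qed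
    then have "(\<Sum>c\<in>PiE I (\<lambda>_. S). F c * indicator (E c) s) = (\<Sum>c\<in>PiE I (\<lambda>_. S). (if c = ?v then F ?v else 0))"
      by (rule sum.cong[OF refl])
    also have "\<dots> = F ?v"
    proof -
      have "?v \<in> PiE I (\<lambda>_. S)" using vals[OF s] by auto
      then show ?thesis using fin by (simp add: sum.delta finite_PiE)
    qed
    finally show ?thesis by simp
  qed
  have intE: "integrable M (indicator (E c) :: 'a \<Rightarrow> real)" for c
    using Emeas[of c] emeasure_finite[of "E c"] by (intro integrable_real_indicator) (auto simp: less_top[symmetric])
  have intS: "integrable M (\<lambda>s. \<Sum>c\<in>PiE I (\<lambda>_. S). F c * indicator (E c) s)"
    by (auto intro!: integrable_sum integrable_mult_right intE)
  show "integrable M (\<lambda>s. F (restrict (\<lambda>i. w i s) I))"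
  proof -
    have "integrable M (\<lambda>s. F (restrict (\<lambda>i. w i s) I)) = integrable M (\<lambda>s. \<Sum>c\<in>PiE I (\<lambda>_. S). F c * indicator (E c) s)"
      by (rule Bochner_Integration.integrable_cong) (auto simp: pt)
    then show ?thesis using intS by simp
  qed
  have "expectation (\<lambda>s. F (restrict (\<lambda>i. w i s) I)) = expectation (\<lambda>s. \<Sum>c\<in>PiE I (\<lambda>_. S). F c * indicator (E c) s)"
    by (rule Bochner_Integration.integral_cong[OF refl]) (simp add: pt)
  also have "\<dots> = (\<Sum>c\<in>PiE I (\<lambda>_. S). F c * prob (E c))"
  proof -
    have "expectation (\<lambda>s. \<Sum>c\<in>PiE I (\<lambda>_. S). F c * indicator (E c) s) = (\<Sum>c\<in>PiE I (\<lambda>_. S). expectation (\<lambda>s. F c * indicator (E c) s))"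
      by (rule Bochner_Integration.integral_sum) (auto intro!: integrable_mult_right intE)
    also have "\<dots> = (\<Sum>c\<in>PiE I (\<lambda>_. S). F c * prob (E c))"
      by (rule sum.cong[OF refl]) (simp add: Emeas)
    finally show ?thesis .
  qed
  also have "\<dots> = (\<Sum>c\<in>PiE I (\<lambda>_. S). F c * p ^ card I)"
    by (rule sum.cong) (auto simp: Eprob)
  finally show "expectation (\<lambda>s. F (restrict (\<lambda>i. w i s) I)) = (\<Sum>c\<in>PiE I (\<lambda>_. S). F c) * p ^ card I"
    by (simp add: sum_distrib_right)
qed


lemma sum_PiE_insert':
  assumes "n \<notin> I"
  shows "(\<Sum>c\<in>PiE (insert n I) (\<lambda>_. S). H c) = (\<Sum>a\<in>S. \<Sum>c\<in>PiE I (\<lambda>_. S). H (c(n:=a)))"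
proof -
  have "(\<Sum>c\<in>PiE (insert n I) (\<lambda>_. S). H c) = (\<Sum>x\<in>S \<times> PiE I (\<lambda>_. S). H ((\<lambda>(y, g). g(n := y)) x))"
    unfolding PiE_insert_eq
    by (subst sum.reindex) (use inj_combinator[OF assms, of "\<lambda>_. S"] in auto)
  also have "\<dots> = (\<Sum>a\<in>S. \<Sum>c\<in>PiE I (\<lambda>_. S). H (c(n:=a)))"
    by (subst sum.cartesian_product) (simp add: case_prod_beta)
  finally show ?thesis .
qed

lemma (in prob_space) indep_expect:
  fixes w :: "nat \<Rightarrow> 'a \<Rightarrow> real" and S :: "real set" and G :: "(nat \<Rightarrow> real) \<Rightarrow> real"
    and \<phi> :: "real \<Rightarrow> real"
  assumes ind: "indep_vars (\<lambda>_. borel) w UNIV"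
    and vals: "\<And>i s. s \<in> space M \<Longrightarrow> w i s \<in> S"
    and pr: "\<And>i c. c \<in> S \<Longrightarrow> prob {s \<in> space M. w i s = c} = p"
    and fin: "finite I" "finite S" and nI: "n \<notin> I"
  shows "integrable M (\<lambda>s. \<phi> (w n s) * G (restrict (\<lambda>i. w i s) I))"
    and "expectation (\<lambda>s. \<phi> (w n s) * G (restrict (\<lambda>i. w i s) I))
         = expectation (\<lambda>s. \<phi> (w n s)) * expectation (\<lambda>s. G (restrict (\<lambda>i. w i s) I))"
proof -
  define F where "F c = \<phi> (c n) * G (restrict c I)" for c :: "nat \<Rightarrow> real"
  have eq: "(\<lambda>s. \<phi> (w n s) * G (restrict (\<lambda>i. w i s) I)) = (\<lambda>s. F (restrict (\<lambda>i. w i s) (insert n I)))"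
  proof
    fix s
    have "restrict (restrict (\<lambda>i. w i s) (insert n I)) I = restrict (\<lambda>i. w i s) I"
      by (auto simp: fun_eq_iff)
    then show "\<phi> (w n s) * G (restrict (\<lambda>i. w i s) I) = F (restrict (\<lambda>i. w i s) (insert n I))"
      by (simp add: F_def)
  qed
  have eq1: "(\<lambda>s. \<phi> (w n s)) = (\<lambda>s. (\<lambda>c. \<phi> (c n)) (restrict (\<lambda>i. w i s) {n}))"
    by simp
  note B = finite_expect[OF ind vals pr]
  show "integrable M (\<lambda>s. \<phi> (w n s) * G (restrict (\<lambda>i. w i s) I))"
    unfolding eq using B(1)[of "insert n I" F] fin by simp
  have s1: "(\<Sum>c\<in>PiE (insert n I) (\<lambda>_. S). F c) = (\<Sum>a\<in>S. \<phi> a) * (\<Sum>c\<in>PiE I (\<lambda>_. S). G c)"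
  proof -
    have "(\<Sum>c\<in>PiE (insert n I) (\<lambda>_. S). F c) = (\<Sum>a\<in>S. \<Sum>c\<in>PiE I (\<lambda>_. S). F (c(n:=a)))"
      by (rule sum_PiE_insert'[OF nI])
    also have "\<dots> = (\<Sum>a\<in>S. \<Sum>c\<in>PiE I (\<lambda>_. S). \<phi> a * G c)"
    proof (intro sum.cong refl)
      fix a c assume c: "c \<in> PiE I (\<lambda>_. S)"
      have "restrict (c(n:=a)) I = c"
        using c nI by (auto simp: fun_eq_iff PiE_def extensional_def)
      then show "F (c(n:=a)) = \<phi> a * G c" by (simp add: F_def)
    qed
    also have "\<dots> = (\<Sum>a\<in>S. \<phi> a) * (\<Sum>c\<in>PiE I (\<lambda>_. S). G c)"
      by (simp add: sum_product)
    finally show ?thesis .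
  qed
  have s2: "(\<Sum>c\<in>PiE {n} (\<lambda>_. S). \<phi> (c n)) = (\<Sum>a\<in>S. \<phi> a)"
    using sum_PiE_insert'[where n=n and I="{}" and S=S and H="\<lambda>c. \<phi> (c n)"] by simp
  have "expectation (\<lambda>s. \<phi> (w n s) * G (restrict (\<lambda>i. w i s) I))
      = (\<Sum>c\<in>PiE (insert n I) (\<lambda>_. S). F c) * p ^ card (insert n I)"
    unfolding eq using B(2)[of "insert n I" F] fin by simp
  also have "\<dots> = ((\<Sum>a\<in>S. \<phi> a) * p) * ((\<Sum>c\<in>PiE I (\<lambda>_. S). G c) * p ^ card I)"
    using fin nI by (simp add: s1)
  also have "\<dots> = expectation (\<lambda>s. \<phi> (w n s)) * expectation (\<lambda>s. G (restrict (\<lambda>i. w i s) I))"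
    using B(2)[of "{n}" "\<lambda>c. \<phi> (c n)"] B(2)[of I G] fin s2 by simp
  finally show "expectation (\<lambda>s. \<phi> (w n s) * G (restrict (\<lambda>i. w i s) I))
         = expectation (\<lambda>s. \<phi> (w n s)) * expectation (\<lambda>s. G (restrict (\<lambda>i. w i s) I))" .
qed


lemma (in prob_space) single_expect:
  fixes w :: "nat \<Rightarrow> 'a \<Rightarrow> real" and S :: "real set" and \<phi> :: "real \<Rightarrow> real"
  assumes ind: "indep_vars (\<lambda>_. borel) w UNIV"
    and vals: "\<And>i s. s \<in> space M \<Longrightarrow> w i s \<in> S"
    and pr: "\<And>i c. c \<in> S \<Longrightarrow> prob {s \<in> space M. w i s = c} = p"
    and fin: "finite S"
  shows "expectation (\<lambda>s. \<phi> (w n s)) = (\<Sum>a\<in>S. \<phi> a) * p"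
proof -
  have s2: "(\<Sum>c\<in>PiE {n} (\<lambda>_. S). \<phi> (c n)) = (\<Sum>a\<in>S. \<phi> a)"
    using sum_PiE_insert'[where n=n and I="{}" and S=S and H="\<lambda>c. \<phi> (c n)"] by simp
  show ?thesis
    using finite_expect(2)[OF ind vals pr, of "{n}" "\<lambda>c. \<phi> (c n)"] fin s2 by simp
qed

theorem lemma3:
  fixes M :: "'a measure" and w :: "nat \<Rightarrow> 'a \<Rightarrow> real"
    and h g :: "real \<Rightarrow> real" and fbar :: "real \<Rightarrow> real \<Rightarrow> real \<Rightarrow> real"
    and rho beta eps omega mu xstar Jstar x0 y0 y1 :: real and k :: nat
  assumes "prob_space M"
    and "rho > 0" and "0 < beta" and "beta < 2" and "eps > 0" and "omega > 0" and "mu > 0"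
    and "prob_space.indep_vars M (\<lambda>_. borel) w UNIV"
    and "\<And>i s. s \<in> space M \<Longrightarrow> w i s = - omega \<or> w i s = omega"
    and "\<And>i. measure M {s \<in> space M. w i s = omega} = 1 / 2"
    and "\<And>i. measure M {s \<in> space M. w i s = - omega} = 1 / 2"
    and "\<And>v. h (- v) = - h v" and "\<And>v. g (- v) = - g v"
    and "\<And>v. sgn (g v) = sgn (h v)"
    and "\<And>v. h v = 0 \<longleftrightarrow> v = 0" and "\<And>v. g v = 0 \<longleftrightarrow> v = 0"
    and "k \<ge> 1"
  shows
   "(let J = Jobj Jstar mu xstar;
         X = (\<lambda>n s. fst (traj rho beta eps mu J h g x0 y0 y1 (\<lambda>i. w i s) n));
         Y = (\<lambda>n s. snd (traj rho beta eps mu J h g x0 y0 y1 (\<lambda>i. w i s) n));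
         \<gamma> = prob_space.expectation M (\<lambda>s. h (w (k - 1) s) * g (w (k - 1) s))
     in prob_space.expectation M
          (\<lambda>s. mu * h (w (k - 1) s) * fbar (X (k - 1) s) (Y (k - 1) s) (Y k s)
                 / (\<bar>Y (k - 1) s\<bar> + eps)
               * Delta rho eps g xstar (X (k - 1) s) (Y (k - 1) s) (w (k - 1) s))
        = mu * \<gamma> * prob_space.expectation M
          (\<lambda>s. fbar (X (k - 1) s) (Y (k - 1) s) (Y k s) * (X (k - 1) s - xstar - rho * Y (k - 1) s)))"
proof -
  interpret prob_space M by fact
  obtain n where kn: "k = Suc n" using assms(17) by (cases k) auto
  let ?J = "Jobj Jstar mu xstar"
  let ?S = "{- omega, omega}"
  have ind: "indep_vars (\<lambda>_. borel) w UNIV" by fact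
  have vals: "\<And>i s. s \<in> space M \<Longrightarrow> w i s \<in> ?S" using assms(9) by auto
  have pr: "\<And>i c. c \<in> ?S \<Longrightarrow> prob {s \<in> space M. w i s = c} = 1/2"
    using assms(10,11) by auto
  have finS: "finite ?S" by simp
  have nI: "n \<notin> {..<n}" by simp
  define A where "A c = fst (traj rho beta eps mu ?J h g x0 y0 y1 c n)" for c
  define B where "B c = snd (traj rho beta eps mu ?J h g x0 y0 y1 c n)" for c
  define Yk where "Yk c = snd (traj rho beta eps mu ?J h g x0 y0 y1 c (Suc n))" for c
  define Fb where "Fb c = fbar (A c) (B c) (Yk c)" for c
  define V where "V s = restrict (\<lambda>i. w i s) {..<n}" for s
  have TV: "traj rho beta eps mu ?J h g x0 y0 y1 (\<lambda>i. w i s) n = traj rho beta eps mu ?J h g x0 y0 y1 (V s) n" for s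
    by (rule traj_dep) (simp add: V_def)
  have YV: "snd (traj rho beta eps mu ?J h g x0 y0 y1 (\<lambda>i. w i s) (Suc n)) = Yk (V s)" for s
    unfolding Yk_def by (rule traj_dep_snd) (simp add: V_def)
  define G1 where "G1 c = mu * (Fb c * (A c - xstar - rho * B c))" for c
  define G2 where "G2 c = mu * Fb c * (- rho * (A c - xstar) * B c + rho^2 / 2 * (B c)^2) / (\<bar>B c\<bar> + eps)" for c
  define G3 where "G3 c = mu * Fb c * (\<bar>B c\<bar> + eps) / 2" for c
  have pw: "mu * h (w n s) * Fb (V s) / (\<bar>B (V s)\<bar> + eps) * Delta rho eps g xstar (A (V s)) (B (V s)) (w n s)
     = (h (w n s) * g (w n s)) * G1 (V s) + h (w n s) * G2 (V s) + (h (w n s) * (g (w n s))^2) * G3 (V s)" for s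
  proof -
    have "\<bar>B (V s)\<bar> + eps > 0" using assms(5) by (smt (verit) abs_ge_zero)
    then show ?thesis unfolding G1_def G2_def G3_def Delta_def
      by (simp add: field_simps power2_eq_square)
  qed
  note IE = indep_expect[OF ind vals pr _ finS nI, unfolded V_def[symmetric]]
  note SE = single_expect[OF ind vals pr finS]
  have om: "- omega \<noteq> omega" using assms(6) by simp
  have e0: "expectation (\<lambda>s. h (w n s)) = 0"
    using SE[of "\<lambda>v. h v" n] om assms(12)[of omega] by simp
  have e3: "expectation (\<lambda>s. h (w n s) * (g (w n s))^2) = 0"
    using SE[of "\<lambda>v. h v * (g v)^2" n] om assms(12)[of omega] assms(13)[of omega] by simp
  have "expectation (\<lambda>s. mu * h (w n s) * Fb (V s) / (\<bar>B (V s)\<bar> + eps) * Delta rho eps g xstar (A (V s)) (B (V s)) (w n s))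
     = expectation (\<lambda>s. (h (w n s) * g (w n s)) * G1 (V s) + h (w n s) * G2 (V s) + (h (w n s) * (g (w n s))^2) * G3 (V s))"
    by (simp only: pw)
  also have "\<dots> = expectation (\<lambda>s. (h (w n s) * g (w n s)) * G1 (V s)) + expectation (\<lambda>s. h (w n s) * G2 (V s))
      + expectation (\<lambda>s. (h (w n s) * (g (w n s))^2) * G3 (V s))"
    using IE(1)[of "\<lambda>v. h v * g v" G1] IE(1)[of "\<lambda>v. h v" G2] IE(1)[of "\<lambda>v. h v * (g v)^2" G3]
    by (simp add: Bochner_Integration.integral_add)
  also have "\<dots> = expectation (\<lambda>s. h (w n s) * g (w n s)) * expectation (\<lambda>s. G1 (V s))"
    using IE(2)[of "\<lambda>v. h v * g v" G1] IE(2)[of "\<lambda>v. h v" G2] IE(2)[of "\<lambda>v. h v * (g v)^2" G3] e0 e3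
    by simp
  also have "\<dots> = mu * expectation (\<lambda>s. h (w n s) * g (w n s)) * expectation (\<lambda>s. Fb (V s) * (A (V s) - xstar - rho * B (V s)))"
    unfolding G1_def by simp
  finally have main: "expectation (\<lambda>s. mu * h (w n s) * Fb (V s) / (\<bar>B (V s)\<bar> + eps) * Delta rho eps g xstar (A (V s)) (B (V s)) (w n s))
     = mu * expectation (\<lambda>s. h (w n s) * g (w n s)) * expectation (\<lambda>s. Fb (V s) * (A (V s) - xstar - rho * B (V s)))" .
  show ?thesis
    unfolding Let_def kn diff_Suc_1 TV YV
    using main by (simp add: Fb_def A_def B_def)
qed

end
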